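(* Let $S = R\cup B$ be a finite set of points in the plane in general position (no three collinear), colored red ($R$) and blue ($B$), with $R$ and $B$ linearly separable. Suppose there exist $r\in R$, $b\in B$, an edge $e$ of $CH(R)$ and an edge $e'$ of $CH(B)$ such that the interiors of $e$ and of $e'$ both intersect the interior of the segment $\overline{rb}$. Then condition C1 or condition C2 holds.
   Context: A $4$-hole of $S$ is a simple quadrilateral with vertices in $S$ and no point of $S$ in its interior; it is convex if the quadrilateral is convex, and balanced if it has exactly two red and two blue vertices. $CH(X)$ is the convex hull of $X$; $\Delta xyz$ is the open triangle with vertices $x,y,z$; for non-collinear $a,b,c$, $\mathcal{W}(a,b,c)$ is the open convex region bounded by the rays from $a$ through $b$ and from $a$ through $c$. An edge $e$ of $CH(R)$ and an edge $e'$ of $CH(B)$ see each other if the union of their vertex sets is the vertex set of a balanced convex $4$-hole whose interior intersects neither $CH(R)$ nor $CH(B)$. Condition C1: there exist an edge $e$ of $CH(R)$ and an edge $e'$ of $CH(B)$ that see each other. Condition C2: there exist an edge $\overline{uv}$ of $CH(R)$ and points $b,z\in B$ with $z\in\Delta uvb$, $R\cap\Delta uvb=\emptyset$ and $R\cap\mathcal{W}(b,u,v)\ne\emptyset$; or the same statement holds with the roles of $R$ and $B$ swapped. *)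

theory Defs
  imports "HOL-Analysis.Analysis"
begin

type_synonym point = "real^2"

definition general_position :: "point set \<Rightarrow> bool" where
  "general_position S \<longleftrightarrow>
     (\<forall>p\<in>S. \<forall>q\<in>S. \<forall>r\<in>S. p \<noteq> q \<and> p \<noteq> r \<and> q \<noteq> r \<longrightarrow> \<not> collinear {p, q, r})"

definition linearly_separable :: "point set \<Rightarrow> point set \<Rightarrow> bool" where
  "linearly_separable R B \<longleftrightarrow>
     (\<exists>a c. a \<noteq> 0 \<and> (\<forall>x\<in>R. a \<bullet> x < c) \<and> (\<forall>y\<in>B. a \<bullet> y > c))"

definition hull_edge :: "point set \<Rightarrow> point \<Rightarrow> point \<Rightarrow> bool" where
  "hull_edge X u v \<longleftrightarrow> u \<in> X \<and> v \<in> X \<and> u \<noteq> v \<and> closed_segment u v face_of convex hull X"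

definition open_triangle :: "point \<Rightarrow> point \<Rightarrow> point \<Rightarrow> point set" where
  "open_triangle x y z = interior (convex hull {x, y, z})"

definition wedge :: "point \<Rightarrow> point \<Rightarrow> point \<Rightarrow> point set" where
  "wedge a b c = {a + s *\<^sub>R (b - a) + t *\<^sub>R (c - a) | s t. s > 0 \<and> t > 0}"

definition convex_4hole :: "point set \<Rightarrow> point set \<Rightarrow> bool" where
  "convex_4hole S Q \<longleftrightarrow> Q \<subseteq> S \<and> card Q = 4 \<and>
     (\<forall>p\<in>Q. p \<notin> convex hull (Q - {p})) \<and>
     S \<inter> interior (convex hull Q) = {}"

definition balanced :: "point set \<Rightarrow> point set \<Rightarrow> point set \<Rightarrow> bool" where
  "balanced R B Q \<longleftrightarrow> card (Q \<inter> R) = 2 \<and> card (Q \<inter> B) = 2"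

definition see_each_other :: "point set \<Rightarrow> point set \<Rightarrow> point \<Rightarrow> point \<Rightarrow> point \<Rightarrow> point \<Rightarrow> bool" where
  "see_each_other R B u v u' v' \<longleftrightarrow>
     hull_edge R u v \<and> hull_edge B u' v' \<and>
     convex_4hole (R \<union> B) {u, v, u', v'} \<and> balanced R B {u, v, u', v'} \<and>
     interior (convex hull {u, v, u', v'}) \<inter> convex hull R = {} \<and>
     interior (convex hull {u, v, u', v'}) \<inter> convex hull B = {}"

definition cond_C1 :: "point set \<Rightarrow> point set \<Rightarrow> bool" where
  "cond_C1 R B \<longleftrightarrow> (\<exists>u v u' v'. see_each_other R B u v u' v')"

definition C2_aux :: "point set \<Rightarrow> point set \<Rightarrow> bool" where
  "C2_aux R B \<longleftrightarrow> (\<exists>u v b z. hull_edge R u v \<and> b \<in> B \<and> z \<in> B \<and>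
      z \<in> open_triangle u v b \<and> R \<inter> open_triangle u v b = {} \<and>
      R \<inter> wedge b u v \<noteq> {})"

definition cond_C2 :: "point set \<Rightarrow> point set \<Rightarrow> bool" where
  "cond_C2 R B \<longleftrightarrow> C2_aux R B \<or> C2_aux B R"

end

theory Submission imports Defs begin

lemma scal:
  fixes a1 a2 d1 d2 e1 e2 :: real
  assumes d: "a1 * d1 + a2 * d2 = 0" and e: "a1 * e1 + a2 * e2 = 0"
    and a: "a1 \<noteq> 0 \<or> a2 \<noteq> 0" and dd: "d1 \<noteq> 0 \<or> d2 \<noteq> 0"
  shows "\<exists>l. e1 = l * d1 \<and> e2 = l * d2"
proof (cases "a1 = 0")
  case True
  then have a2: "a2 \<noteq> 0" using a by simp
  have "d2 = 0" "e2 = 0" using True d e a2 by auto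
  then have "d1 \<noteq> 0" using dd by simp
  then show ?thesis using \<open>d2 = 0\<close> \<open>e2 = 0\<close> by (intro exI[of _ "e1 / d1"]) simp
next
  case False
  have e': "a1 * e1 = - a2 * e2" using e by linarith
  have d': "a1 * d1 = - a2 * d2" using d by linarith
  have "a1 * (d2 * e1) = a1 * (d1 * e2)"
  proof -
    have "a1 * (d2 * e1) = d2 * (a1 * e1)" by simp
    also have "\<dots> = d2 * (- a2 * e2)" using e' by simp
    also have "\<dots> = e2 * (- a2 * d2)" by simp
    also have "\<dots> = e2 * (a1 * d1)" using d' by simp
    finally show ?thesis by (simp add: mult.commute)
  qed
  then have de: "d2 * e1 = d1 * e2" using False by simp
  show ?thesis
  proof (cases "d2 = 0")
    case True
    then have "a1 * d1 = 0" using d' by simp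
    then have "d1 = 0" using False by simp
    with True dd show ?thesis by simp
  next
    case n: False
    have "e1 = (e2 / d2) * d1" using de n by (simp add: field_simps)
    moreover have "e2 = (e2 / d2) * d2" using n by simp
    ultimately show ?thesis by blast
  qed
qed


lemma line2:
  fixes a u v w :: "real^2"
  assumes "a \<noteq> 0" "a \<bullet> u = c" "a \<bullet> v = c" "a \<bullet> w = c" "u \<noteq> v"
  shows "\<exists>l. w = u + l *\<^sub>R (v - u)"
proof -
  have d: "a$1 * (v$1 - u$1) + a$2 * (v$2 - u$2) = 0"
    using assms(2,3) by (simp add: inner_vec_def sum_2 algebra_simps)
  have e: "a$1 * (w$1 - u$1) + a$2 * (w$2 - u$2) = 0"
    using assms(2,4) by (simp add: inner_vec_def sum_2 algebra_simps)
  have a12: "a$1 \<noteq> 0 \<or> a$2 \<noteq> 0" using assms(1) by (simp add: vec_eq_iff forall_2)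
  have uv: "v$1 - u$1 \<noteq> 0 \<or> v$2 - u$2 \<noteq> 0" using assms(5) by (auto simp add: vec_eq_iff forall_2)
  obtain l where "w$1 - u$1 = l * (v$1 - u$1)" "w$2 - u$2 = l * (v$2 - u$2)"
    using scal[OF d e a12 uv] by blast
  then show ?thesis by (intro exI[of _ l]) (simp add: vec_eq_iff forall_2 algebra_simps)
qed

lemma coll_line:
  fixes u v :: "'a::real_vector"
  shows "collinear {u, v, u + l *\<^sub>R (v - u)}"
proof -
  have "u + l *\<^sub>R (v - u) - v = (1 - l) *\<^sub>R (u - v)" by (simp add: algebra_simps)
  then have "collinear {0, u - v, u + l *\<^sub>R (v - u) - v}"
    by (metis collinear_lemma)
  then show ?thesis
    by (subst collinear_3) auto
qed

lemma seg_coll: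
  fixes u v :: "'a::real_vector"
  assumes "x \<in> closed_segment u v" shows "collinear {u, v, x}"
proof -
  obtain t where "x = (1 - t) *\<^sub>R u + t *\<^sub>R v" using assms by (auto simp: in_segment)
  then have "x = u + t *\<^sub>R (v - u)" by (simp add: algebra_simps)
  then show ?thesis using coll_line by metis
qed

lemma edge_support:
  fixes X :: "point set"
  assumes "finite X" "hull_edge X u v"
  shows "\<exists>a \<beta>. (\<forall>x\<in>convex hull X. a \<bullet> x \<le> \<beta>) \<and>
     (\<forall>x\<in>convex hull X. a \<bullet> x = \<beta> \<longrightarrow> x \<in> closed_segment u v) \<and> a \<bullet> u = \<beta> \<and> a \<bullet> v = \<beta>"
proof -
  have ph: "polyhedron (convex hull X)"
    by (simp add: assms(1) polytope_convex_hull polytope_imp_polyhedron)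
  have "closed_segment u v face_of convex hull X" using assms(2) by (simp add: hull_edge_def)
  then have "closed_segment u v exposed_face_of convex hull X"
    using exposed_face_of_polyhedron[OF ph] by blast
  then obtain a b where ab: "convex hull X \<subseteq> {x. a \<bullet> x \<le> b}"
     "closed_segment u v = convex hull X \<inter> {x. a \<bullet> x = b}"
    by (auto simp: exposed_face_of_def)
  have "u \<in> closed_segment u v" "v \<in> closed_segment u v" by auto
  then have "a \<bullet> u = b" "a \<bullet> v = b" using ab(2) by blast+
  then show ?thesis using ab by (intro exI[of _ a] exI[of _ b]) blast
qed

lemma tri_interior:
  fixes A B C :: "real^2"
  assumes nc: "\<not> collinear {A, B, C}" and pos: "x > 0" "y > 0" "z > 0" "x + y + z = 1"
  shows "x *\<^sub>R A + y *\<^sub>R B + z *\<^sub>R C \<in> interior (convex hull {A, B, C})"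
proof -
  have d: "A \<noteq> B" "A \<noteq> C" "B \<noteq> C" using nc by (auto simp: insert_commute)
  have na: "\<not> affine_dependent {A, B, C}" using nc collinear_3_eq_affine_dependent by blast
  have card: "card {A, B, C} = 3" using d by auto
  define f where "f = (\<lambda>p. if p = A then x else if p = B then y else z)"
  have "x *\<^sub>R A + y *\<^sub>R B + z *\<^sub>R C \<in> {q. \<exists>u. (\<forall>p\<in>{A,B,C}. 0 < u p \<and> u p < 1) \<and> sum u {A,B,C} = 1 \<and> (\<Sum>p\<in>{A,B,C}. u p *\<^sub>R p) = q}"
    apply (rule CollectI, rule exI[of _ f])
    using d pos by (auto simp: f_def)
  then show ?thesis using interior_convex_hull_explicit[OF na] card by simp
qed

lemma uv_b_coll:
  fixes u v b :: "'a::real_vector"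
  assumes "open_segment u v \<inter> open_segment u b \<noteq> {}"
  shows "collinear {u, v, b}"
proof -
  obtain p where p: "p \<in> open_segment u v" "p \<in> open_segment u b" using assms by blast
  obtain al where al: "0 < al" "al < 1" "p = (1 - al) *\<^sub>R u + al *\<^sub>R v" using p(1) by (auto simp: in_segment)
  obtain s where s: "0 < s" "s < 1" "p = (1 - s) *\<^sub>R u + s *\<^sub>R b" using p(2) by (auto simp: in_segment)
  have "s *\<^sub>R (b - u) = al *\<^sub>R (v - u)" using al(3) s(3) by (simp add: algebra_simps)
  then have eq: "s *\<^sub>R (b - u) = al *\<^sub>R (v - u)" .
  have "b - u = (1 / s) *\<^sub>R (s *\<^sub>R (b - u))" using s(1) by simp
  also have "\<dots> = (al / s) *\<^sub>R (v - u)" using eq by simp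
  finally have "b - u = (al / s) *\<^sub>R (v - u)" .
  then have "b = u + (al / s) *\<^sub>R (v - u)" by (simp add: algebra_simps)
  then show ?thesis using coll_line by metis
qed

lemma notin3:
  fixes x y z w a :: "'a::real_inner"
  assumes "a \<bullet> x = c" "a \<bullet> y = c" "a \<bullet> z > c" "a \<bullet> w > c" "x \<noteq> y"
  shows "x \<notin> convex hull {y, z, w}"
proof
  assume "x \<in> convex hull {y, z, w}"
  then obtain l1 l2 l3 where l: "0 \<le> l1" "0 \<le> l2" "0 \<le> l3" "l1 + l2 + l3 = 1"
    "x = l1 *\<^sub>R y + l2 *\<^sub>R z + l3 *\<^sub>R w" by (auto simp: convex_hull_3)
  have "a \<bullet> x = l1 * c + l2 * (a \<bullet> z) + l3 * (a \<bullet> w)"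
    using l(5) assms(2) by (simp add: inner_add_right)
  moreover have "l1 = 1 - l2 - l3" using l(4) by simp
  ultimately have "c = (1 - l2 - l3) * c + l2 * (a \<bullet> z) + l3 * (a \<bullet> w)" using assms(1) by simp
  then have e: "l2 * (a \<bullet> z - c) + l3 * (a \<bullet> w - c) = 0"
    by (simp add: algebra_simps)
  have "l2 * (a \<bullet> z - c) \<ge> 0" "l3 * (a \<bullet> w - c) \<ge> 0" using l assms by auto
  then have "l2 * (a \<bullet> z - c) = 0" "l3 * (a \<bullet> w - c) = 0" using e by linarith+
  then have "l2 = 0" "l3 = 0" using assms(3,4) by auto
  then have "x = y" using l by simp
  then show False using assms(5) by simp
qed

lemma int_disj:
  fixes a :: "real^2"
  assumes "a \<noteq> 0" "\<forall>x\<in>K. a \<bullet> x \<le> c" "\<forall>q\<in>Q. a \<bullet> q \<ge> c"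
  shows "interior (convex hull Q) \<inter> K = {}"
proof -
  have "convex hull Q \<subseteq> {x. a \<bullet> x \<ge> c}"
    using assms(3) by (intro hull_minimal) (auto simp: convex_halfspace_ge)
  then have "interior (convex hull Q) \<subseteq> {x. a \<bullet> x > c}"
    using interior_mono interior_halfspace_ge[OF assms(1)] by metis
  then show ?thesis using assms(2) by fastforce
qed


lemma gp_nc:
  assumes "general_position S" "x \<in> S" "y \<in> S" "z \<in> S" "x \<noteq> y" "x \<noteq> z" "y \<noteq> z"
  shows "\<not> collinear {x, y, z}"
  using assms unfolding general_position_def by blast

lemma side_basic:
  fixes R B :: "point set"
  assumes GP: "general_position (R \<union> B)" and sepR: "\<forall>x\<in>R. g \<bullet> x < c" and sepB: "\<forall>y\<in>B. g \<bullet> y > c"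
    and r: "r \<in> R" and b: "b \<in> B" and e: "hull_edge R u v"
    and aR: "\<forall>x\<in>convex hull R. a \<bullet> x \<le> \<beta>" "\<forall>x\<in>convex hull R. a \<bullet> x = \<beta> \<longrightarrow> x \<in> closed_segment u v"
      "a \<bullet> u = \<beta>" "a \<bullet> v = \<beta>"
    and p: "p \<in> open_segment u v" "p \<in> open_segment r b"
  shows "a \<bullet> r < \<beta> \<and> a \<noteq> 0 \<and> a \<bullet> b > \<beta> \<and> r \<in> wedge b u v \<and> R \<inter> open_triangle u v b = {}"
proof -
  have uv: "u \<in> R" "v \<in> R" "u \<noteq> v" using e by (auto simp: hull_edge_def)
  have bR: "b \<notin> R" using sepR sepB b by fastforce
  then have bu: "b \<noteq> u" "b \<noteq> v" using uv by auto
  have GPu: "u \<in> R \<union> B" "v \<in> R \<union> B" "b \<in> R \<union> B" "r \<in> R \<union> B" using uv b r by auto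
  have rseg: "r \<notin> closed_segment u v"
  proof
    assume rs: "r \<in> closed_segment u v"
    show False
    proof (cases "r = u")
      case True
      then have "collinear {u, v, b}" using uv_b_coll[of u v b] p True by blast
      then show False using gp_nc[OF GP GPu(1,2,3)] uv bu by auto
    next
      case ru: False
      show ?thesis
      proof (cases "r = v")
        case True
        then have "collinear {v, u, b}" using uv_b_coll[of v u b] p True
          by (metis disjoint_iff open_segment_commute)
        then show False using gp_nc[OF GP GPu(1,2,3)] uv bu by (auto simp: insert_commute)
      next
        case False
        then show False using gp_nc[OF GP GPu(1,2,4)] uv ru seg_coll[OF rs] by auto
      qed
    qed
  qed
  have ar: "a \<bullet> r < \<beta>"
    using aR(1,2) hull_inc[OF r] rseg by force
  have a0: "a \<noteq> 0" using ar aR(3) by auto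
  obtain al where al: "0 < al" "al < 1" "p = (1 - al) *\<^sub>R u + al *\<^sub>R v" using p(1) by (auto simp: in_segment)
  obtain s where s: "0 < s" "s < 1" "p = (1 - s) *\<^sub>R r + s *\<^sub>R b" using p(2) by (auto simp: in_segment)
  have "a \<bullet> p = (1 - al) * \<beta> + al * \<beta>" using al(3) aR(3,4) by (simp add: inner_add_right)
  then have ap: "a \<bullet> p = \<beta>" by (simp add: algebra_simps)
  have ap2: "(1 - s) * (a \<bullet> r) + s * (a \<bullet> b) = \<beta>" using s(3) ap by (simp add: inner_add_right)
  have "(1 - s) * (a \<bullet> r) < (1 - s) * \<beta>" using ar s by (intro mult_strict_left_mono) auto
  then have "s * (a \<bullet> b) > s * \<beta>" using ap2 by (simp add: algebra_simps)
  then have ab: "a \<bullet> b > \<beta>" using s(1) by simp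
  have comp: "(1 - al) * u$i + al * v$i = (1 - s) * r$i + s * b$i" for i
  proof -
    have "p$i = (1 - al) * u$i + al * v$i" using al(3) by simp
    moreover have "p$i = (1 - s) * r$i + s * b$i" using s(3) by simp
    ultimately show ?thesis by simp
  qed
  define S where "S = (1 - al) / (1 - s)"
  define T where "T = al / (1 - s)"
  have "r = b + S *\<^sub>R (u - b) + T *\<^sub>R (v - b)"
  proof -
    have "r$i = b$i + S * (u$i - b$i) + T * (v$i - b$i)" for i
    proof -
      have "1 - s \<noteq> 0" using s by simp
      have "S * (u$i - b$i) + T * (v$i - b$i) = ((1 - al) * (u$i - b$i) + al * (v$i - b$i)) / (1 - s)"
        unfolding S_def T_def by (simp add: add_divide_distrib)
      also have "(1 - al) * (u$i - b$i) + al * (v$i - b$i) = (1 - s) * (r$i - b$i)"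
        using comp[of i] by (simp add: algebra_simps)
      finally have "S * (u$i - b$i) + T * (v$i - b$i) = r$i - b$i" using \<open>1 - s \<noteq> 0\<close> by simp
      then show ?thesis by simp
    qed
    then show ?thesis by (simp add: vec_eq_iff)
  qed
  moreover have "S > 0" "T > 0" using al s by (auto simp: S_def T_def)
  ultimately have w: "r \<in> wedge b u v" unfolding wedge_def by blast
  have "interior (convex hull {u, v, b}) \<inter> R = {}"
    using int_disj[OF a0, of R \<beta> "{u, v, b}"] aR(1,3,4) ab hull_inc by fastforce
  then have "R \<inter> open_triangle u v b = {}" by (auto simp: open_triangle_def)
  then show ?thesis using ar a0 ab w by blast
qed


lemma side_main:
  fixes R B :: "point set"
  assumes GP: "general_position (R \<union> B)" and sepR: "\<forall>x\<in>R. g \<bullet> x < c" and sepB: "\<forall>y\<in>B. g \<bullet> y > c"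
    and r: "r \<in> R" and b: "b \<in> B" and e: "hull_edge R u v" and e': "hull_edge B u' v'"
    and aR: "\<forall>x\<in>convex hull R. a \<bullet> x \<le> \<beta>" "\<forall>x\<in>convex hull R. a \<bullet> x = \<beta> \<longrightarrow> x \<in> closed_segment u v"
      "a \<bullet> u = \<beta>" "a \<bullet> v = \<beta>"
    and p: "p \<in> open_segment u v" "p \<in> open_segment r b"
    and q: "q \<in> open_segment u' v'" "q \<in> open_segment r b"
    and empty: "R \<inter> open_triangle u' v' r = {}"
  shows "a \<bullet> u' > \<beta>"
proof (rule ccontr)
  assume "\<not> a \<bullet> u' > \<beta>"
  then have au'le: "a \<bullet> u' \<le> \<beta>" by simp
  have basic: "a \<bullet> r < \<beta> \<and> a \<noteq> 0 \<and> a \<bullet> b > \<beta> \<and> r \<in> wedge b u v \<and> R \<inter> open_triangle u v b = {}"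
    by (rule side_basic[OF GP sepR sepB r b e aR p])
  then have ar: "a \<bullet> r < \<beta>" and a0: "a \<noteq> 0" and ab: "a \<bullet> b > \<beta>" by auto
  have uv: "u \<in> R" "v \<in> R" "u \<noteq> v" using e by (auto simp: hull_edge_def)
  have uv': "u' \<in> B" "v' \<in> B" "u' \<noteq> v'" using e' by (auto simp: hull_edge_def)
  have disj: "R \<inter> B = {}" using sepR sepB by fastforce
  have cR: "\<forall>x\<in>convex hull R. g \<bullet> x < c"
  proof -
    have "convex hull R \<subseteq> {x. g \<bullet> x < c}" using sepR by (intro hull_minimal) (auto simp: convex_halfspace_lt)
    then show ?thesis by blast
  qed
  have cB: "\<forall>x\<in>convex hull B. g \<bullet> x > c"
  proof -
    have "convex hull B \<subseteq> {x. g \<bullet> x > c}" using sepB by (intro hull_minimal) (auto simp: convex_halfspace_gt)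
    then show ?thesis by blast
  qed
  have segR: "closed_segment u v \<subseteq> convex hull R"
    unfolding segment_convex_hull using uv by (intro hull_mono) auto
  have segB: "closed_segment u' v' \<subseteq> convex hull B"
    unfolding segment_convex_hull using uv' by (intro hull_mono) auto
  obtain al where al: "0 < al" "al < 1" "p = (1 - al) *\<^sub>R u + al *\<^sub>R v" using p(1) by (auto simp: in_segment)
  obtain s where s: "0 < s" "s < 1" "p = (1 - s) *\<^sub>R r + s *\<^sub>R b" using p(2) by (auto simp: in_segment)
  obtain k where k: "0 < k" "k < 1" "q = (1 - k) *\<^sub>R u' + k *\<^sub>R v'" using q(1) by (auto simp: in_segment)
  obtain t where t: "0 < t" "t < 1" "q = (1 - t) *\<^sub>R r + t *\<^sub>R b" using q(2) by (auto simp: in_segment)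
  have gp: "g \<bullet> p < c" using cR segR open_closed_segment[OF p(1)] by blast
  have gq: "g \<bullet> q > c" using cB segB open_closed_segment[OF q(1)] by blast
  have gr: "g \<bullet> r < c" using sepR r by blast
  have gb: "g \<bullet> b > c" using sepB b by blast
  have gpq: "g \<bullet> q - g \<bullet> p = (t - s) * (g \<bullet> b - g \<bullet> r)"
    unfolding s(3) t(3) by (simp add: inner_add_right algebra_simps)
  have st: "s < t"
  proof (rule ccontr)
    assume "\<not> s < t"
    then have "(t - s) * (g \<bullet> b - g \<bullet> r) \<le> 0" using gr gb by (intro mult_nonpos_nonneg) auto
    then show False using gpq gp gq by linarith
  qed
  have "a \<bullet> p = (1 - al) * \<beta> + al * \<beta>" using al(3) aR(3,4) by (simp add: inner_add_right)
  then have ap: "a \<bullet> p = \<beta>" by (simp add: algebra_simps)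
  have apq: "a \<bullet> q - a \<bullet> p = (t - s) * (a \<bullet> b - a \<bullet> r)"
    unfolding s(3) t(3) by (simp add: inner_add_right algebra_simps)
  have "(t - s) * (a \<bullet> b - a \<bullet> r) > 0" using st ar ab by (intro mult_pos_pos) auto
  then have aq: "a \<bullet> q > \<beta>" using apq ap by linarith
  have u'R: "u' \<notin> R" using uv' disj by blast
  have GPs: "u \<in> R \<union> B" "v \<in> R \<union> B" "u' \<in> R \<union> B" "v' \<in> R \<union> B" "r \<in> R \<union> B"
    using uv uv' r by auto
  have au': "a \<bullet> u' < \<beta>"
  proof (rule ccontr)
    assume "\<not> a \<bullet> u' < \<beta>"
    then have "a \<bullet> u' = \<beta>" using au'le by simp
    then obtain l where "u' = u + l *\<^sub>R (v - u)" using line2[OF a0 aR(3,4) _ uv(3)] by blast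
    then have "collinear {u, v, u'}" using coll_line by metis
    moreover have "u \<noteq> u'" "v \<noteq> u'" using uv u'R by auto
    ultimately show False using gp_nc[OF GP GPs(1,2,3)] uv(3) by blast
  qed
  define om where "om = (\<beta> - a \<bullet> u') / (a \<bullet> q - a \<bullet> u')"
  have om: "0 < om" "om < 1" using au' aq by (auto simp: om_def field_simps)
  define w where "w = (1 - om) *\<^sub>R u' + om *\<^sub>R q"
  have "a \<bullet> w = a \<bullet> u' + om * (a \<bullet> q - a \<bullet> u')" by (simp add: w_def inner_add_right algebra_simps)
  also have "om * (a \<bullet> q - a \<bullet> u') = \<beta> - a \<bullet> u'" using au' aq by (simp add: om_def)
  finally have aw: "a \<bullet> w = \<beta>" by simp
  have "w \<in> closed_segment u' q" unfolding w_def in_segment using om by (intro exI[of _ om]) auto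
  moreover have "closed_segment u' q \<subseteq> closed_segment u' v'"
    using open_closed_segment[OF q(1)] by (simp add: subset_closed_segment)
  ultimately have "w \<in> convex hull B" using segB by blast
  then have "g \<bullet> w > c" using cB by blast
  then have wseg: "w \<notin> closed_segment u v" using cR segR by fastforce
  obtain lam where lam: "w = u + lam *\<^sub>R (v - u)" using line2[OF a0 aR(3,4) aw uv(3)] by blast
  have lam01: "lam < 0 \<or> lam > 1"
  proof (rule ccontr)
    assume "\<not> (lam < 0 \<or> lam > 1)"
    then have "0 \<le> lam" "lam \<le> 1" by auto
    moreover have "w = (1 - lam) *\<^sub>R u + lam *\<^sub>R v" using lam by (simp add: algebra_simps)
    ultimately have "w \<in> closed_segment u v" unfolding in_segment by blast
    then show False using wseg by simp
  qed
  have pc: "p$i = u$i + al * (v$i - u$i)" for i unfolding al(3) by (simp add: algebra_simps)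
  have wc: "w$i = u$i + lam * (v$i - u$i)" for i using lam by simp
  obtain x mu where x: "x \<in> R" "0 < mu" "mu < 1" "x = (1 - mu) *\<^sub>R p + mu *\<^sub>R w"
  proof (cases "lam > 1")
    case True
    define mu where "mu = (1 - al) / (lam - al)"
    have mu: "0 < mu" "mu < 1" using True al by (auto simp: mu_def field_simps)
    have m: "mu * (lam - al) = 1 - al" using True al by (simp add: mu_def)
    have "v$i = (1 - mu) * p$i + mu * w$i" for i
    proof -
      have "(1 - mu) * p$i + mu * w$i = u$i + (al + mu * (lam - al)) * (v$i - u$i)"
        unfolding pc wc by (simp add: algebra_simps)
      then show ?thesis using m by simp
    qed
    then have "v = (1 - mu) *\<^sub>R p + mu *\<^sub>R w" by (simp add: vec_eq_iff)
    then show ?thesis using that uv(2) mu by blast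
  next
    case False
    then have lneg: "lam < 0" using lam01 by simp
    define mu where "mu = al / (al - lam)"
    have mu: "0 < mu" "mu < 1" using lneg al by (auto simp: mu_def field_simps)
    have m: "mu * (al - lam) = al" using lneg al by (simp add: mu_def)
    have "u$i = (1 - mu) * p$i + mu * w$i" for i
    proof -
      have "(1 - mu) * p$i + mu * w$i = u$i + (al - mu * (al - lam)) * (v$i - u$i)"
        unfolding pc wc by (simp add: algebra_simps)
      then show ?thesis using m by simp
    qed
    then have "u = (1 - mu) *\<^sub>R p + mu *\<^sub>R w" by (simp add: vec_eq_iff)
    then show ?thesis using that uv(1) mu by blast
  qed
  define sg where "sg = s / t"
  have sg: "0 < sg" "sg < 1" using s t st by (auto simp: sg_def field_simps)
  have pc2: "p$i = (1 - sg) * r$i + sg * q$i" for i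
  proof -
    have pi: "p$i = (1 - s) * r$i + s * b$i" using s(3) by simp
    have qi: "q$i = (1 - t) * r$i + t * b$i" using t(3) by simp
    have m: "sg * t = s" using t by (simp add: sg_def)
    have "(1 - sg) * r$i + sg * q$i = r$i + (sg * t) * (b$i - r$i)"
      unfolding qi by (simp add: algebra_simps)
    also have "\<dots> = p$i" unfolding m pi by (simp add: algebra_simps)
    finally show ?thesis by simp
  qed
  define K where "K = (1 - mu) * sg + mu * om"
  define cr where "cr = (1 - mu) * (1 - sg)"
  define cu where "cu = mu * (1 - om) + K * (1 - k)"
  define cv where "cv = K * k"
  have pos: "cu > 0" "cv > 0" "cr > 0" "cu + cv + cr = 1"
  proof -
    have "K > 0" using x(2,3) sg om by (auto simp: K_def intro!: add_pos_pos mult_pos_pos)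
    then show "cu > 0" "cv > 0" "cr > 0" using x(2,3) sg om k
      by (auto simp: cu_def cv_def cr_def intro!: add_pos_pos mult_pos_pos)
    show "cu + cv + cr = 1" by (simp add: cu_def cv_def cr_def K_def algebra_simps)
  qed
  have "x$i = cu * u'$i + cv * v'$i + cr * r$i" for i
  proof -
    have xi: "x$i = (1 - mu) * p$i + mu * w$i" using x(4) by simp
    have wi: "w$i = (1 - om) * u'$i + om * q$i" by (simp add: w_def)
    have qi: "q$i = (1 - k) * u'$i + k * v'$i" using k(3) by simp
    show ?thesis unfolding xi wi pc2 qi cu_def cv_def cr_def K_def by (simp add: algebra_simps)
  qed
  then have xe: "x = cu *\<^sub>R u' + cv *\<^sub>R v' + cr *\<^sub>R r" by (simp add: vec_eq_iff)
  have rB: "r \<notin> B" using r disj by blast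
  have nc: "\<not> collinear {u', v', r}" using gp_nc[OF GP GPs(3,4,5)] uv'(3) rB uv' by auto
  have "x \<in> open_triangle u' v' r"
    unfolding open_triangle_def xe using tri_interior[OF nc pos] .
  then show False using empty x(1) by blast
qed


theorem lemma8:
  fixes R B :: "point set" and r b u v u' v' :: point
  assumes "finite R" and "finite B"
    and "general_position (R \<union> B)"
    and "linearly_separable R B"
    and "r \<in> R" and "b \<in> B"
    and "hull_edge R u v" and "hull_edge B u' v'"
    and "open_segment u v \<inter> open_segment r b \<noteq> {}"
    and "open_segment u' v' \<inter> open_segment r b \<noteq> {}"
  shows "cond_C1 R B \<or> cond_C2 R B"
proof -
  obtain g c where gc: "\<forall>x\<in>R. g \<bullet> x < c" "\<forall>y\<in>B. g \<bullet> y > c"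
    using assms(4) unfolding linearly_separable_def by blast
  have sepB': "\<forall>x\<in>B. (-g) \<bullet> x < -c" and sepR': "\<forall>y\<in>R. (-g) \<bullet> y > -c" using gc by auto
  have GP': "general_position (B \<union> R)" using assms(3) by (simp add: Un_commute)
  obtain p where p: "p \<in> open_segment u v" "p \<in> open_segment r b" using assms(9) by blast
  obtain q where q: "q \<in> open_segment u' v'" "q \<in> open_segment r b" using assms(10) by blast
  have p': "p \<in> open_segment b r" and q': "q \<in> open_segment b r"
    using p q by (simp_all add: open_segment_commute)
  have pvu: "p \<in> open_segment v u" and qvu: "q \<in> open_segment v' u'"
    using p q by (simp_all add: open_segment_commute)
  obtain a \<beta> where aR: "\<forall>x\<in>convex hull R. a \<bullet> x \<le> \<beta>" "\<forall>x\<in>convex hull R. a \<bullet> x = \<beta> \<longrightarrow> x \<in> closed_segment u v"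
      "a \<bullet> u = \<beta>" "a \<bullet> v = \<beta>"
    using edge_support[OF assms(1) assms(7)] by blast
  obtain a' \<beta>' where aB: "\<forall>x\<in>convex hull B. a' \<bullet> x \<le> \<beta>'" "\<forall>x\<in>convex hull B. a' \<bullet> x = \<beta>' \<longrightarrow> x \<in> closed_segment u' v'"
      "a' \<bullet> u' = \<beta>'" "a' \<bullet> v' = \<beta>'"
    using edge_support[OF assms(2) assms(8)] by blast
  have bR: "a \<bullet> r < \<beta> \<and> a \<noteq> 0 \<and> a \<bullet> b > \<beta> \<and> r \<in> wedge b u v \<and> R \<inter> open_triangle u v b = {}"
    by (rule side_basic[OF assms(3) gc(1) gc(2) assms(5) assms(6) assms(7) aR p])
  have bB: "a' \<bullet> b < \<beta>' \<and> a' \<noteq> 0 \<and> a' \<bullet> r > \<beta>' \<and> b \<in> wedge r u' v' \<and> B \<inter> open_triangle u' v' r = {}"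
    by (rule side_basic[OF GP' sepB' sepR' assms(6) assms(5) assms(8) aB q(1) q'])
  have uv: "u \<in> R" "v \<in> R" "u \<noteq> v" using assms(7) by (auto simp: hull_edge_def)
  have uv': "u' \<in> B" "v' \<in> B" "u' \<noteq> v'" using assms(8) by (auto simp: hull_edge_def)
  have disj: "R \<inter> B = {}" using gc by fastforce
  show ?thesis
  proof (cases "\<exists>z\<in>B. z \<in> open_triangle u v b")
    case True
    then obtain z where "z \<in> B" "z \<in> open_triangle u v b" by blast
    then have "C2_aux R B" unfolding C2_aux_def using assms(7) assms(6) bR assms(5)
      by blast
    then show ?thesis by (simp add: cond_C2_def)
  next
    case nA: False
    show ?thesis
    proof (cases "\<exists>z\<in>R. z \<in> open_triangle u' v' r")
      case True
      then obtain z where "z \<in> R" "z \<in> open_triangle u' v' r" by blast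
      then have "C2_aux B R" unfolding C2_aux_def using assms(8) assms(5) bB assms(6)
        by blast
      then show ?thesis by (simp add: cond_C2_def)
    next
      case nB: False
      have eR: "R \<inter> open_triangle u' v' r = {}" and eR': "R \<inter> open_triangle v' u' r = {}"
        using nB by (auto simp: open_triangle_def insert_commute)
      have eB: "B \<inter> open_triangle u v b = {}" and eB': "B \<inter> open_triangle v u b = {}"
        using nA by (auto simp: open_triangle_def insert_commute)
      have he: "hull_edge B v' u'" using assms(8) by (auto simp: hull_edge_def closed_segment_commute)
      have he': "hull_edge R v u" using assms(7) by (auto simp: hull_edge_def closed_segment_commute)
      have au': "a \<bullet> u' > \<beta>"
        by (rule side_main[OF assms(3) gc(1,2) assms(5,6,7,8) aR p q eR])
      have av': "a \<bullet> v' > \<beta>"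
        by (rule side_main[OF assms(3) gc(1,2) assms(5,6,7) he aR p qvu q(2) eR'])
      have a'u: "a' \<bullet> u > \<beta>'"
        by (rule side_main[OF GP' sepB' sepR' assms(6,5,8,7) aB q(1) q' p(1) p' eB])
      have a'v: "a' \<bullet> v > \<beta>'"
        by (rule side_main[OF GP' sepB' sepR' assms(6,5,8) he' aB q(1) q' pvu p' eB'])
      have a0: "a \<noteq> 0" and a'0: "a' \<noteq> 0" using bR bB by auto
      define Q where "Q = {u, v, u', v'}"
      have d: "u \<noteq> u'" "u \<noteq> v'" "v \<noteq> u'" "v \<noteq> v'" using uv uv' disj by auto
      have QR: "\<forall>x\<in>Q. a \<bullet> x \<ge> \<beta>" using aR(3,4) au' av' by (auto simp: Q_def)
      have QB: "\<forall>x\<in>Q. a' \<bullet> x \<ge> \<beta>'" using aB(3,4) a'u a'v by (auto simp: Q_def)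
      have iR: "interior (convex hull Q) \<inter> convex hull R = {}"
        using int_disj[OF a0 _ QR] aR(1) by blast
      have iB: "interior (convex hull Q) \<inter> convex hull B = {}"
        using int_disj[OF a'0 _ QB] aB(1) by blast
      have card: "card Q = 4" using d uv(3) uv'(3) by (simp add: Q_def)
      have cp: "\<forall>x\<in>Q. x \<notin> convex hull (Q - {x})"
      proof
        fix x assume "x \<in> Q"
        then consider "x = u" | "x = v" | "x = u'" | "x = v'" by (auto simp: Q_def)
        then show "x \<notin> convex hull (Q - {x})"
        proof cases
          case 1
          have "Q - {x} = {v, u', v'}" using 1 d uv(3) by (auto simp: Q_def)
          then show ?thesis using notin3[of a u \<beta> v u' v'] aR(3,4) au' av' uv(3) 1 by simp
        next
          case 2
          have "Q - {x} = {u, u', v'}" using 2 d uv(3) by (auto simp: Q_def)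
          then show ?thesis using notin3[of a v \<beta> u u' v'] aR(3,4) au' av' uv(3) 2 by simp
        next
          case 3
          have "Q - {x} = {v', u, v}" using 3 d uv'(3) by (auto simp: Q_def)
          then show ?thesis using notin3[of a' u' \<beta>' v' u v] aB(3,4) a'u a'v uv'(3) 3 by simp
        next
          case 4
          have "Q - {x} = {u', u, v}" using 4 d uv'(3) by (auto simp: Q_def)
          then show ?thesis using notin3[of a' v' \<beta>' u' u v] aB(3,4) a'u a'v uv'(3) 4 by simp
        qed
      qed
      have empt: "(R \<union> B) \<inter> interior (convex hull Q) = {}"
        using iR iB hull_inc[of _ R convex] hull_inc[of _ B convex] by blast
      have h4: "convex_4hole (R \<union> B) Q"
        unfolding convex_4hole_def using card cp empt uv uv' by (auto simp: Q_def)
      have "Q \<inter> R = {u, v}" "Q \<inter> B = {u', v'}" using uv uv' disj by (auto simp: Q_def)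
      then have bal: "balanced R B Q" using uv(3) uv'(3) by (simp add: balanced_def)
      have "see_each_other R B u v u' v'"
        unfolding see_each_other_def using assms(7,8) h4 bal iR iB by (simp add: Q_def)
      then show ?thesis unfolding cond_C1_def by blast
    qed
  qed
qed

end
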